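(* For every graph $G$, $\operatorname{box}(G)\le \min\{2\,MED(G)+2,\ MED(\overline{G})\}$, where $\overline{G}$ is the complement of $G$.
   Context: A dominating edge set of a graph $H$ is a set $D$ of edges such that every edge of $H$ not in $D$ shares an endpoint with some edge of $D$; $MED(H)$ is the minimum cardinality of a dominating edge set of $H$. The boxicity $\operatorname{box}(G)$ is the minimum $b$ such that $G$ is the intersection graph of axis-parallel boxes in $\mathbb{R}^b$ (products of $b$ closed intervals), one box per vertex. *)

theory Defs
  imports Complex_Main
begin

definition graph :: "'a set \<Rightarrow> 'a set set \<Rightarrow> bool" where
  "graph V E \<longleftrightarrow> finite V \<and> E \<subseteq> {{u, v} | u v. u \<in> V \<and> v \<in> V \<and> u \<noteq> v}"

definition complement_edges :: "'a set \<Rightarrow> 'a set set \<Rightarrow> 'a set set" where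
  "complement_edges V E = {{u, v} | u v. u \<in> V \<and> v \<in> V \<and> u \<noteq> v \<and> {u, v} \<notin> E}"

definition dominating_edge_set :: "'a set set \<Rightarrow> 'a set set \<Rightarrow> bool" where
  "dominating_edge_set E D \<longleftrightarrow> D \<subseteq> E \<and> (\<forall>e \<in> E - D. \<exists>d \<in> D. e \<inter> d \<noteq> {})"

definition MED :: "'a set set \<Rightarrow> nat" where
  "MED E = (LEAST n. \<exists>D. dominating_edge_set E D \<and> card D = n)"

text \<open>Box representation in R^b: vertex v gets the box \<Prod>_{i<b} [l v i, r v i];
  distinct vertices are adjacent iff their boxes intersect.\<close>
definition box_rep :: "'a set \<Rightarrow> 'a set set \<Rightarrow> nat \<Rightarrow> ('a \<Rightarrow> nat \<Rightarrow> real) \<Rightarrow> ('a \<Rightarrow> nat \<Rightarrow> real) \<Rightarrow> bool" where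
  "box_rep V E b l r \<longleftrightarrow>
     (\<forall>v \<in> V. \<forall>i < b. l v i \<le> r v i) \<and>
     (\<forall>u \<in> V. \<forall>v \<in> V. u \<noteq> v \<longrightarrow>
        ({u, v} \<in> E \<longleftrightarrow> (\<forall>i < b. l u i \<le> r v i \<and> l v i \<le> r u i)))"

definition boxicity :: "'a set \<Rightarrow> 'a set set \<Rightarrow> nat" where
  "boxicity V E = (LEAST b. \<exists>l r. box_rep V E b l r)"

end

theory Submission imports Defs begin

lemma finite_E: assumes "graph V E" shows "finite E"
proof -
  have "E \<subseteq> (\<lambda>(u,v). {u,v}) ` (V \<times> V)" using assms unfolding graph_def by auto
  moreover have "finite (V \<times> V)" using assms unfolding graph_def by auto
  ultimately show ?thesis by (meson finite_imageI finite_subset)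
qed

lemma MED_ex: "\<exists>D. dominating_edge_set E D \<and> card D = MED E"
proof -
  have "\<exists>D. dominating_edge_set E D \<and> card D = card E"
    by (rule exI[of _ E]) (auto simp: dominating_edge_set_def)
  then show ?thesis unfolding MED_def by (rule LeastI)
qed

lemma box_le: "box_rep V E b l r \<Longrightarrow> boxicity V E \<le> b"
  unfolding boxicity_def by (rule Least_le) blast

lemma part1:
  assumes G: "graph V E" and D: "dominating_edge_set (complement_edges V E) D"
    and fin: "finite D"
  shows "\<exists>l r. box_rep V E (card D) l r"
proof -
  obtain h where h: "bij_betw h {0..<card D} D" using ex_bij_betw_nat_finite[OF fin] by blast
  define P where "P i p \<longleftrightarrow> fst p \<in> V \<and> snd p \<in> V \<and> fst p \<noteq> snd p \<and> {fst p, snd p} \<notin> E \<and> h i = {fst p, snd p}" for i p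
  define A where "A i = (SOME p. P i p)" for i
  have PA: "P i (A i)" if "i < card D" for i
  proof -
    have "h i \<in> D" using h that by (auto simp: bij_betw_def)
    then have "h i \<in> complement_edges V E" using D by (auto simp: dominating_edge_set_def)
    then obtain x y where "x \<in> V" "y \<in> V" "x \<noteq> y" "{x, y} \<notin> E" "h i = {x, y}"
      unfolding complement_edges_def by blast
    then have "P i (x, y)" unfolding P_def by simp
    then have "\<exists>p. P i p" by blast
    then show ?thesis unfolding A_def by (rule someI_ex)
  qed
  define a where "a i = fst (A i)" for i
  define b where "b i = snd (A i)" for i
  define l :: "_ \<Rightarrow> nat \<Rightarrow> real" where "l v i = (if v = a i then 0 else if v = b i then 3 else if {v, a i} \<in> E then 0 else 1)" for v i
  define r :: "_ \<Rightarrow> nat \<Rightarrow> real" where "r v i = (if v = a i then 0 else if v = b i then 3 else if {v, b i} \<in> E then 3 else 2)" for v i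
  have ab: "a i \<in> V \<and> b i \<in> V \<and> a i \<noteq> b i \<and> {a i, b i} \<notin> E \<and> {b i, a i} \<notin> E \<and> h i = {a i, b i}" if "i < card D" for i
  proof -
    have 1: "a i \<in> V \<and> b i \<in> V \<and> a i \<noteq> b i \<and> {a i, b i} \<notin> E \<and> h i = {a i, b i}"
      using PA[OF that] unfolding P_def a_def b_def by blast
    moreover have "{b i, a i} = {a i, b i}" by (rule insert_commute)
    ultimately show ?thesis by simp
  qed
  have "box_rep V E (card D) l r"
    unfolding box_rep_def
  proof (intro conjI ballI allI impI)
    fix v i assume "v \<in> V" "i < card D"
    then show "l v i \<le> r v i" unfolding l_def r_def by simp
  next
    fix u v assume uv: "u \<in> V" "v \<in> V" "u \<noteq> v"
    show "({u, v} \<in> E) = (\<forall>i<card D. l u i \<le> r v i \<and> l v i \<le> r u i)"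
    proof
      assume e: "{u, v} \<in> E"
      show "\<forall>i<card D. l u i \<le> r v i \<and> l v i \<le> r u i"
      proof (intro allI impI)
        fix i assume i: "i < card D"
        have e': "{v, u} \<in> E" using e by (simp add: insert_commute)
        have "\<not> (u = a i \<and> v = b i)" "\<not> (u = b i \<and> v = a i)" using ab[OF i] e by auto
        have abi': "a i \<noteq> b i" "b i \<noteq> a i" using ab[OF i] by auto
        from \<open>\<not> (u = a i \<and> v = b i)\<close> \<open>\<not> (u = b i \<and> v = a i)\<close> consider "u = a i" "v \<noteq> a i" "v \<noteq> b i" | "u = b i" "v \<noteq> a i" "v \<noteq> b i"
          | "v = a i" "u \<noteq> a i" "u \<noteq> b i" | "v = b i" "u \<noteq> a i" "u \<noteq> b i"
          | "u \<noteq> a i" "u \<noteq> b i" "v \<noteq> a i" "v \<noteq> b i" using uv by blast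
        then show "l u i \<le> r v i \<and> l v i \<le> r u i"
        proof cases
          case 1
            have "l u i = 0" "r u i = 0" using 1 by (simp_all add: l_def r_def)
            moreover have "l v i = 0" using 1 e' by (simp add: l_def)
            moreover have "r v i \<ge> 2" using 1 by (simp add: r_def)
            ultimately show ?thesis by linarith
        next
          case 2
            have "l u i = 3" "r u i = 3" using 2 abi' by (simp_all add: l_def r_def)
            moreover have "r v i = 3" using 2 e' abi' by (simp add: r_def)
            moreover have "l v i \<le> 1" using 2 abi' by (simp add: l_def)
            ultimately show ?thesis by linarith
        next
          case 3
            have "l v i = 0" "r v i = 0" using 3 by (simp_all add: l_def r_def)
            moreover have "l u i = 0" using 3 e by (simp add: l_def)
            moreover have "r u i \<ge> 2" using 3 by (simp add: r_def)
            ultimately show ?thesis by linarith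
        next
          case 4
            have "l v i = 3" "r v i = 3" using 4 abi' by (simp_all add: l_def r_def)
            moreover have "r u i = 3" using 4 e abi' by (simp add: r_def)
            moreover have "l u i \<le> 1" using 4 abi' by (simp add: l_def)
            ultimately show ?thesis by linarith
        next
          case 5
            have "l u i \<le> 1" "l v i \<le> 1" "r u i \<ge> 2" "r v i \<ge> 2" using 5 by (simp_all add: l_def r_def)
            then show ?thesis by linarith
        qed
      qed
    next
      assume all: "\<forall>i<card D. l u i \<le> r v i \<and> l v i \<le> r u i"
      show "{u, v} \<in> E"
      proof (rule ccontr)
        assume ne: "{u, v} \<notin> E"
        then have ce: "{u, v} \<in> complement_edges V E" using uv unfolding complement_edges_def by blast
        have "\<exists>d\<in>D. {u, v} \<inter> d \<noteq> {}"
        proof (cases "{u,v} \<in> D")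
          case True then show ?thesis by auto
        next
          case False then show ?thesis using ce D unfolding dominating_edge_set_def by blast
        qed
        then obtain d where d: "d \<in> D" "{u, v} \<inter> d \<noteq> {}" by blast
        have "d \<in> h ` {0..<card D}" using h d(1) by (simp add: bij_betw_def)
        then obtain i where i: "i < card D" and hi: "d = h i" by (auto elim: imageE)
        have int: "{u, v} \<inter> h i \<noteq> {}" using d(2) hi by simp
        have ne': "{v, u} \<notin> E" using ne by (simp add: insert_commute)
        have c: "u = a i \<or> u = b i \<or> v = a i \<or> v = b i" using int ab[OF i] by auto
        have abi: "a i \<noteq> b i" using ab[OF i] by simp
        have lr: "l u i \<le> r v i" "l v i \<le> r u i" using all i by auto
        from c show False
        proof (elim disjE)
          assume x: "u = a i"
          have "r u i = 0" using x by (simp add: r_def)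
          moreover have "l v i \<ge> 1" using x uv ne' abi by (cases "v = b i") (auto simp: l_def)
          ultimately show False using lr by linarith
        next
          assume x: "u = b i"
          have "l u i = 3" using x abi by (simp add: l_def)
          moreover have "r v i \<le> 2" using x uv ne' abi by (cases "v = a i") (auto simp: r_def)
          ultimately show False using lr by linarith
        next
          assume x: "v = a i"
          have "r v i = 0" using x by (simp add: r_def)
          moreover have "l u i \<ge> 1" using x uv ne abi by (cases "u = b i") (auto simp: l_def)
          ultimately show False using lr by linarith
        next
          assume x: "v = b i"
          have "l v i = 3" using x abi by (simp add: l_def)
          moreover have "r u i \<le> 2" using x uv ne abi by (cases "u = a i") (auto simp: r_def)
          ultimately show False using lr by linarith
        qed
      qed
    qed
  qed
  then show ?thesis by blast
qed

lemma part2: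
  assumes G: "graph V E" and D: "dominating_edge_set E D" and fin: "finite D"
  shows "\<exists>l r. box_rep V E (card (\<Union>D) + 1) l r"
proof -
  define C where "C = \<Union>D"
  define S where "S = V - C"
  define k where "k = card C"
  have CV: "C \<subseteq> V"
  proof
    fix x assume "x \<in> C"
    then obtain d where d: "d \<in> D" "x \<in> d" unfolding C_def by blast
    then have "d \<in> E" using D unfolding dominating_edge_set_def by blast
    then obtain p q where "d = {p, q}" "p \<in> V" "q \<in> V" using G unfolding graph_def by blast
    then show "x \<in> V" using d(2) by auto
  qed
  have finV: "finite V" using G unfolding graph_def by simp
  have finC: "finite C" using finite_subset[OF CV finV] .
  have finS: "finite S" unfolding S_def using finV by simp
  obtain h where h: "bij_betw h {0..<k} C" using ex_bij_betw_nat_finite[OF finC] unfolding k_def by blast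
  obtain g where g: "bij_betw g S {0..<card S}" using ex_bij_betw_finite_nat[OF finS] by blast
  have gS: "g v < card S" if "v \<in> S" for v using g that by (auto simp: bij_betw_def)
  have ginj: "g u \<noteq> g v" if "u \<in> S" "v \<in> S" "u \<noteq> v" for u v
    using g that by (auto simp: bij_betw_def inj_on_def)
  have cov: "u \<in> C \<or> v \<in> C" if "{u, v} \<in> E" for u v
  proof (cases "{u,v} \<in> D")
    case True then show ?thesis unfolding C_def by auto
  next
    case False
    have "{u,v} \<in> E - D" using False that by simp
    then have "\<exists>d\<in>D. {u,v} \<inter> d \<noteq> {}" using D unfolding dominating_edge_set_def by (elim conjE) (rule bspec)
    then obtain d where d: "d \<in> D" "{u,v} \<inter> d \<noteq> {}" by (elim bexE) 
    then have "u \<in> d \<or> v \<in> d" by auto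
    then show ?thesis unfolding C_def using d(1) by auto
  qed
  define l :: "_ \<Rightarrow> nat \<Rightarrow> real" where "l v i = (if i < k then (if v = h i then 0 else if {v, h i} \<in> E then 0 else 1) else (if v \<in> C then 0 else real (g v)))" for v i
  define r :: "_ \<Rightarrow> nat \<Rightarrow> real" where "r v i = (if i < k then (if v = h i then 0 else 2) else (if v \<in> C then real (card S) else real (g v)))" for v i
  have "box_rep V E (k + 1) l r"
    unfolding box_rep_def
  proof (intro conjI ballI allI impI)
    fix v i assume "v \<in> V" "i < k + 1"
    then show "l v i \<le> r v i" by (auto simp: l_def r_def)
  next
    fix u v assume uv: "u \<in> V" "v \<in> V" "u \<noteq> v"
    show "({u, v} \<in> E) = (\<forall>i<k+1. l u i \<le> r v i \<and> l v i \<le> r u i)"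
    proof
      assume e: "{u, v} \<in> E"
      have e': "{v, u} \<in> E" using e by (simp add: insert_commute)
      show "\<forall>i<k+1. l u i \<le> r v i \<and> l v i \<le> r u i"
      proof (intro allI impI)
        fix i assume i: "i < k + 1"
        show "l u i \<le> r v i \<and> l v i \<le> r u i"
        proof (cases "i < k")
          case True
          consider "u = h i" | "v = h i" | "u \<noteq> h i" "v \<noteq> h i" by blast
          then show ?thesis
          proof cases
            case 1
            have "l u i = 0" "r u i = 0" using 1 True by (simp_all add: l_def r_def)
            moreover have "l v i = 0" "r v i = 2" using 1 True e' uv(3) by (simp_all add: l_def r_def)
            ultimately show ?thesis by linarith
          next
            case 2
            have "l v i = 0" "r v i = 0" using 2 True by (simp_all add: l_def r_def)
            moreover have "l u i = 0" "r u i = 2" using 2 True e uv(3) by (simp_all add: l_def r_def)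
            ultimately show ?thesis by linarith
          next
            case 3
            have "l u i \<le> 1" "l v i \<le> 1" "r u i = 2" "r v i = 2" using 3 True by (simp_all add: l_def r_def)
            then show ?thesis by linarith
          qed
        next
          case False
          have "u \<in> C \<or> v \<in> C" using cov e by blast
          moreover have "u \<notin> C \<Longrightarrow> u \<in> S" "v \<notin> C \<Longrightarrow> v \<in> S" using uv unfolding S_def by auto
          then have bnd: "l u i \<le> real (card S)" "l v i \<le> real (card S)" "r u i \<ge> 0" "r v i \<ge> 0"
            using False gS[of u] gS[of v] by (auto simp: l_def r_def)
          from \<open>u \<in> C \<or> v \<in> C\<close> show ?thesis
          proof
            assume "u \<in> C"
            then have "l u i = 0" "r u i = real (card S)" using False by (simp_all add: l_def r_def)
            then show ?thesis using bnd by linarith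
          next
            assume "v \<in> C"
            then have "l v i = 0" "r v i = real (card S)" using False by (simp_all add: l_def r_def)
            then show ?thesis using bnd by linarith
          qed
        qed
      qed
    next
      assume all: "\<forall>i<k+1. l u i \<le> r v i \<and> l v i \<le> r u i"
      show "{u, v} \<in> E"
      proof (rule ccontr)
        assume ne: "{u, v} \<notin> E"
        have ne': "{v, u} \<notin> E" using ne by (simp add: insert_commute)
        consider "u \<in> C" | "v \<in> C" | "u \<in> S" "v \<in> S" using uv unfolding S_def by blast
        then show False
        proof cases
          case 1
          then have "u \<in> h ` {0..<k}" using h by (simp add: bij_betw_def)
          then obtain i where i: "i < k" "h i = u" by (auto elim: imageE)
          have "r u i = 0" using i by (simp add: r_def)
          moreover have "l v i = 1" using i ne' uv by (simp add: l_def)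
          ultimately show False using all[rule_format, of i] i by simp
        next
          case 2
          then have "v \<in> h ` {0..<k}" using h by (simp add: bij_betw_def)
          then obtain i where i: "i < k" "h i = v" by (auto elim: imageE)
          have "r v i = 0" using i by (simp add: r_def)
          moreover have "l u i = 1" using i ne uv by (simp add: l_def)
          ultimately show False using all[rule_format, of i] i by simp
        next
          case 3
          then have "u \<notin> C" "v \<notin> C" unfolding S_def by auto
          then have "l u k = real (g u)" "r u k = real (g u)" "l v k = real (g v)" "r v k = real (g v)"
            by (simp_all add: l_def r_def)
          then have "g u = g v" using all[rule_format, of k] by simp
          then show False using ginj[OF 3 uv(3)] by simp
        qed
      qed
    qed
  qed
  then have "box_rep V E (card (\<Union>D) + 1) l r" unfolding k_def C_def .
  then show ?thesis by (intro exI)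
qed

lemma card_Union_D:
  assumes G: "graph V E" and D: "dominating_edge_set E D"
  shows "card (\<Union>D) \<le> 2 * card D"
proof -
  have "card (\<Union>D) \<le> sum card D" by (rule card_Union_le_sum_card)
  also have "\<dots> \<le> sum (\<lambda>_. 2) D"
  proof (rule sum_mono)
    fix d assume "d \<in> D"
    then have "d \<in> E" using D unfolding dominating_edge_set_def by blast
    then obtain x y where "d = {x, y}" using G unfolding graph_def by blast
    then show "card d \<le> 2" by (simp add: card_insert_if)
  qed
  finally show ?thesis by simp
qed

theorem theorem17:
  assumes "graph V E"
  shows "boxicity V E \<le> min (2 * MED E + 2) (MED (complement_edges V E))"
proof -
  have finE: "finite E" using finite_E[OF assms] .
  have finCE: "finite (complement_edges V E)"
  proof -
    have "complement_edges V E \<subseteq> (\<lambda>(u,v). {u,v}) ` (V \<times> V)" unfolding complement_edges_def by auto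
    moreover have "finite (V \<times> V)" using assms unfolding graph_def by auto
    ultimately show ?thesis by (meson finite_imageI finite_subset)
  qed
  obtain D where D: "dominating_edge_set E D" "card D = MED E" using MED_ex by blast
  have finD: "finite D" using D(1) finE unfolding dominating_edge_set_def by (meson finite_subset)
  obtain l r where "box_rep V E (card (\<Union>D) + 1) l r" using part2[OF assms D(1) finD] by blast
  then have b1: "boxicity V E \<le> card (\<Union>D) + 1" by (rule box_le)
  have "card (\<Union>D) \<le> 2 * MED E" using card_Union_D[OF assms D(1)] D(2) by simp
  with b1 have 1: "boxicity V E \<le> 2 * MED E + 2" by simp
  obtain D' where D': "dominating_edge_set (complement_edges V E) D'" "card D' = MED (complement_edges V E)" using MED_ex by blast
  have finD': "finite D'" using D'(1) finCE unfolding dominating_edge_set_def by (meson finite_subset)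
  obtain l' r' where "box_rep V E (card D') l' r'" using part1[OF assms D'(1) finD'] by blast
  then have "boxicity V E \<le> card D'" by (rule box_le)
  with 1 D'(2) show ?thesis by simp
qed

end
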